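(* Let $\mathcal{G}$ be a MAG on vertex set $V$, let $W\subseteq V$ and let $a,b\in W$. Let $C\subseteq W$ and $E\subseteq V\setminus W$ be such that $a,b\notin C$ and $a$ and $b$ are m-separated by $C\cup E$ in $\mathcal{G}$. Then $a$ and $b$ are m-separated by $C$ in the induced subgraph $\mathcal{G}_W$.
   Context: A MAG is an acyclic directed mixed graph (directed and bidirected edges, no directed cycles) with $\mathrm{sib}(v)\cap\mathrm{an}(v)=\emptyset$ for all $v$ and in which every nonadjacent pair of vertices is m-separated by some set. A path is m-connecting given $C$ if every non-endpoint collider (both adjacent edges on the path have an arrowhead at it) lies in $\mathrm{an}(C)$ and every other non-endpoint vertex lies outside $C$; $a$ and $b$ are m-separated by $C$ if there is no m-connecting path between them given $C$. $\mathcal{G}_W$ is the induced subgraph on $W$ (ancestors computed in $\mathcal{G}_W$). *)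

theory Defs
  imports Main
begin

text \<open>Directed mixed graphs: vertex set, directed edges (u,v) meaning u -> v,
  and bidirected edges (stored symmetrically) meaning u <-> v.\<close>
record 'v mgraph =
  verts :: "'v set"
  dedges :: "('v \<times> 'v) set"
  bedges :: "('v \<times> 'v) set"

definition wf_mgraph :: "'v mgraph \<Rightarrow> bool" where
  "wf_mgraph G \<longleftrightarrow> finite (verts G) \<and> dedges G \<subseteq> verts G \<times> verts G
     \<and> bedges G \<subseteq> verts G \<times> verts G \<and> sym (bedges G)"

definition anc :: "'v mgraph \<Rightarrow> 'v set \<Rightarrow> 'v set" where
  "anc G X = {u \<in> verts G. \<exists>x\<in>X. (u, x) \<in> (dedges G)\<^sup>*}"

definition sib :: "'v mgraph \<Rightarrow> 'v \<Rightarrow> 'v set" where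
  "sib G v = {u. (u, v) \<in> bedges G}"

definition adj :: "'v mgraph \<Rightarrow> 'v \<Rightarrow> 'v \<Rightarrow> bool" where
  "adj G u v \<longleftrightarrow> (u, v) \<in> dedges G \<or> (v, u) \<in> dedges G \<or> (u, v) \<in> bedges G"

definition arrowhead_at :: "'v mgraph \<Rightarrow> 'v \<Rightarrow> 'v \<Rightarrow> bool" where
  "arrowhead_at G u v \<longleftrightarrow> (u, v) \<in> dedges G \<or> (u, v) \<in> bedges G"

definition is_path :: "'v mgraph \<Rightarrow> 'v list \<Rightarrow> 'v \<Rightarrow> 'v \<Rightarrow> bool" where
  "is_path G p a b \<longleftrightarrow> p \<noteq> [] \<and> hd p = a \<and> last p = b \<and> distinct p
     \<and> set p \<subseteq> verts G \<and> (\<forall>i. Suc i < length p \<longrightarrow> adj G (p ! i) (p ! Suc i))"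

definition collider :: "'v mgraph \<Rightarrow> 'v list \<Rightarrow> nat \<Rightarrow> bool" where
  "collider G p i \<longleftrightarrow> arrowhead_at G (p ! (i - 1)) (p ! i) \<and> arrowhead_at G (p ! Suc i) (p ! i)"

definition m_connecting :: "'v mgraph \<Rightarrow> 'v list \<Rightarrow> 'v \<Rightarrow> 'v \<Rightarrow> 'v set \<Rightarrow> bool" where
  "m_connecting G p a b C \<longleftrightarrow> is_path G p a b \<and>
     (\<forall>i. 0 < i \<and> Suc i < length p \<longrightarrow>
        (collider G p i \<longrightarrow> p ! i \<in> anc G C) \<and> (\<not> collider G p i \<longrightarrow> p ! i \<notin> C))"

definition m_separated :: "'v mgraph \<Rightarrow> 'v \<Rightarrow> 'v \<Rightarrow> 'v set \<Rightarrow> bool" where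
  "m_separated G a b C \<longleftrightarrow> \<not> (\<exists>p. m_connecting G p a b C)"

definition is_MAG :: "'v mgraph \<Rightarrow> bool" where
  "is_MAG G \<longleftrightarrow> wf_mgraph G
     \<and> (\<forall>v. (v, v) \<notin> (dedges G)\<^sup>+)
     \<and> (\<forall>v \<in> verts G. sib G v \<inter> anc G {v} = {})
     \<and> (\<forall>a \<in> verts G. \<forall>b \<in> verts G. a \<noteq> b \<and> \<not> adj G a b \<longrightarrow>
          (\<exists>C \<subseteq> verts G - {a, b}. m_separated G a b C))"

definition induced :: "'v mgraph \<Rightarrow> 'v set \<Rightarrow> 'v mgraph" where
  "induced G W = \<lparr>verts = W, dedges = dedges G \<inter> (W \<times> W), bedges = bedges G \<inter> (W \<times> W)\<rparr>"

end

theory Submission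
  imports Defs
begin

theorem propositionB2:
  fixes G :: "'v mgraph" and W C E :: "'v set" and a b :: 'v
  assumes "is_MAG G"
    and "W \<subseteq> verts G" and "a \<in> W" and "b \<in> W"
    and "C \<subseteq> W" and "E \<subseteq> verts G - W"
    and "a \<notin> C" and "b \<notin> C"
    and "m_separated G a b (C \<union> E)"
  shows "m_separated (induced G W) a b C"
proof -
  have key: "m_connecting G p a b (C \<union> E)" if mc: "m_connecting (induced G W) p a b C" for p
  proof -
    have path: "is_path (induced G W) p a b" using mc unfolding m_connecting_def by blast
    hence pW: "set p \<subseteq> W" unfolding is_path_def induced_def by simp
    have adjI: "adj G u v" if "adj (induced G W) u v" for u v
      using that unfolding adj_def induced_def by auto
    have pG: "is_path G p a b" using path pW assms(2) adjI unfolding is_path_def by blast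
    have ah: "arrowhead_at (induced G W) u v = arrowhead_at G u v" if "u \<in> W" "v \<in> W" for u v
      using that unfolding arrowhead_at_def induced_def by auto
    have col: "collider (induced G W) p i = collider G p i" if "0 < i" "Suc i < length p" for i
    proof -
      have "p ! (i-1) \<in> W" "p ! i \<in> W" "p ! Suc i \<in> W" using that pW
        by (auto intro!: subsetD[OF pW] nth_mem)
      thus ?thesis unfolding collider_def using ah by simp
    qed
    have ancs: "anc (induced G W) C \<subseteq> anc G (C \<union> E)"
    proof
      fix u assume "u \<in> anc (induced G W) C"
      then obtain x where x: "x \<in> C" "u \<in> W" "(u, x) \<in> (dedges G \<inter> W \<times> W)\<^sup>*"
        unfolding anc_def induced_def by auto
      have "(u, x) \<in> (dedges G)\<^sup>*" using x(3) rtrancl_mono[of "dedges G \<inter> W \<times> W" "dedges G"] by blast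
      thus "u \<in> anc G (C \<union> E)" unfolding anc_def using x assms(2) by blast
    qed
    have "\<forall>i. 0 < i \<and> Suc i < length p \<longrightarrow> (collider G p i \<longrightarrow> p ! i \<in> anc G (C \<union> E)) \<and> (\<not> collider G p i \<longrightarrow> p ! i \<notin> C \<union> E)"
    proof (intro allI impI)
      fix i assume i: "0 < i \<and> Suc i < length p"
      have piW: "p ! i \<in> W" using i pW by (auto intro!: subsetD[OF pW] nth_mem)
      show "(collider G p i \<longrightarrow> p ! i \<in> anc G (C \<union> E)) \<and> (\<not> collider G p i \<longrightarrow> p ! i \<notin> C \<union> E)"
        using mc i col[of i] ancs piW assms(6) unfolding m_connecting_def by blast
    qed
    thus ?thesis unfolding m_connecting_def using pG by blast
  qed
  show ?thesis using assms(9) key unfolding m_separated_def by blast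
qed

end
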